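(* Let $\mathcal A=\{a_1,\dots,a_m\}\subseteq(\mathbb Z^d)^*$ be vectors such that there exist $\lambda_1,\dots,\lambda_m\ge0$, not all $0$, with $\sum_i\lambda_ia_i=0$, let $A$ be the $m\times d$ matrix with rows $a_1,\dots,a_m$, let $\mathbf 1\in\mathbb R^m$ be the all-ones vector, and let $\varepsilon>0$. Then the set \[ \{c\in\mathbb R\mid 0<c\le\varepsilon^{-1}\text{ and } Ax+c\mathbf 1\in\mathbb Z^m\text{ for some }x\in\mathbb R^d\} \] is finite. Moreover, if $P$ is a $d$-dimensional lattice polytope with core normals $a_1,\dots,a_m$ and $c=\operatorname{qcd}(P)^{-1}$, then there is a rational $y$ with $Ay+c\mathbf 1\in\mathbb Z^m$.
   Context: A $d$-dimensional lattice polytope is written $P=\{x\in\mathbb R^d\mid \langle a_i,x\rangle\le b_i,\ 1\le i\le n\}$ with an irredundant system, primitive $a_i\in(\mathbb Z^d)^*$ and (since $P$ is a lattice polytope) integers $b_i$. For rational $c>0$, $P^{(c)}=\{x\mid \langle a_i,x\rangle\le b_i-c\ \forall i\}$; $\operatorname{qcd}(P)^{-1}=\max\{c>0\mid P^{(c)}\ne\emptyset\}$; with $c_0=\operatorname{qcd}(P)^{-1}$, $\operatorname{core}P=P^{(c_0)}$, and the core normals are those $a_i$ with $\langle a_i,y\rangle=b_i-c_0$ for all $y\in\operatorname{core}P$. *)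

theory Defs
  imports "HOL-Analysis.Analysis"
begin

text \<open>Integral vectors (elements of the lattice Z^d, or of its dual identified with Z^d
  via the standard inner product).\<close>
definition integral_vec :: "real^'d \<Rightarrow> bool" where
  "integral_vec v \<longleftrightarrow> (\<forall>j. v $ j \<in> \<int>)"

definition rational_vec :: "real^'d \<Rightarrow> bool" where
  "rational_vec v \<longleftrightarrow> (\<forall>j. v $ j \<in> \<rat>)"

definition primitive_vec :: "real^'d \<Rightarrow> bool" where
  "primitive_vec v \<longleftrightarrow> integral_vec v \<and> v \<noteq> 0 \<and>
     (\<forall>k::int. k \<ge> 2 \<longrightarrow> \<not> integral_vec ((1 / real_of_int k) *\<^sub>R v))"

definition polyh :: "nat \<Rightarrow> (nat \<Rightarrow> real^'d) \<Rightarrow> (nat \<Rightarrow> real) \<Rightarrow> (real^'d) set" where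
  "polyh n a b = {x. \<forall>i<n. a i \<bullet> x \<le> b i}"

definition irredundant :: "nat \<Rightarrow> (nat \<Rightarrow> real^'d) \<Rightarrow> (nat \<Rightarrow> real) \<Rightarrow> bool" where
  "irredundant n a b \<longleftrightarrow>
     (\<forall>i<n. {x. \<forall>k<n. k \<noteq> i \<longrightarrow> a k \<bullet> x \<le> b k} \<noteq> polyh n a b)"

definition lattice_polytope :: "(real^'d) set \<Rightarrow> bool" where
  "lattice_polytope P \<longleftrightarrow> (\<exists>S. finite S \<and> (\<forall>v\<in>S. integral_vec v) \<and> P = convex hull S)"

definition shrunk :: "nat \<Rightarrow> (nat \<Rightarrow> real^'d) \<Rightarrow> (nat \<Rightarrow> real) \<Rightarrow> real \<Rightarrow> (real^'d) set" where
  "shrunk n a b c = {x. \<forall>i<n. a i \<bullet> x \<le> b i - c}"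

definition qcd_inv :: "nat \<Rightarrow> (nat \<Rightarrow> real^'d) \<Rightarrow> (nat \<Rightarrow> real) \<Rightarrow> real" where
  "qcd_inv n a b = (GREATEST c. c > 0 \<and> shrunk n a b c \<noteq> {})"

definition core :: "nat \<Rightarrow> (nat \<Rightarrow> real^'d) \<Rightarrow> (nat \<Rightarrow> real) \<Rightarrow> (real^'d) set" where
  "core n a b = shrunk n a b (qcd_inv n a b)"

definition core_normal_idx :: "nat \<Rightarrow> (nat \<Rightarrow> real^'d) \<Rightarrow> (nat \<Rightarrow> real) \<Rightarrow> nat set" where
  "core_normal_idx n a b =
     {i. i < n \<and> (\<forall>y\<in>core n a b. a i \<bullet> y = b i - qcd_inv n a b)}"

end

theory Submission
  imports Defs
begin


lemma exists_phi: "\<exists>\<phi>::real\<Rightarrow>real. (\<forall>x y. \<phi> (x+y) = \<phi> x + \<phi> y) \<and> \<phi> 1 = 1 \<and> (\<forall>x. \<phi> x \<in> \<rat>)"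
proof -
  interpret p: vector_space_pair "\<lambda>q (x::real). of_rat q * x" "\<lambda>q (r::rat). q * r"
    by unfold_locales (auto simp: algebra_simps of_rat_add of_rat_mult)
  have ind: "p.vs1.independent {1::real}"
    by (rule p.vs1.independent_insertI) (auto simp: p.vs1.span_empty p.vs1.independent_empty)
  define f where "f = p.construct {1::real} (\<lambda>_. 1::rat)"
  have lin: "Vector_Spaces.linear (\<lambda>q (x::real). of_rat q * x) (\<lambda>q (r::rat). q * r) f"
    unfolding f_def by (rule p.linear_construct[OF ind])
  have f1: "f 1 = 1" unfolding f_def by (rule p.construct_basis[OF ind]) simp
  have add: "f (x+y) = f x + f y" for x y
    using lin unfolding Vector_Spaces.linear_def module_hom_def module_hom_axioms_def by blast
  show ?thesis
    by (rule exI[of _ "\<lambda>x. of_rat (f x)"]) (auto simp: add f1 of_rat_add)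
qed

locale addphi =
  fixes \<phi> :: "real \<Rightarrow> real"
  assumes add: "\<And>x y. \<phi> (x+y) = \<phi> x + \<phi> y" and one: "\<phi> 1 = 1"
begin
lemma zero: "\<phi> 0 = 0" using add[of 0 0] by simp
lemma neg: "\<phi> (-x) = - \<phi> x" using add[of x "-x"] zero by simp
lemma sum: "\<phi> (\<Sum>i\<in>A. f i) = (\<Sum>i\<in>A. \<phi> (f i))"
  by (induction A rule: infinite_finite_induct) (auto simp: zero add)
lemma nat_mult: "\<phi> (real k * x) = real k * \<phi> x"
  by (induction k) (auto simp: zero add algebra_simps)
lemma int_mult: assumes "k \<in> \<int>" shows "\<phi> (k * x) = k * \<phi> x"
proof -
  obtain j where k: "k = of_int j" using assms Ints_cases by blast
  show ?thesis
  proof (cases "j \<ge> 0")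
    case True then have "k = real (nat j)" using k by simp
    then show ?thesis using nat_mult by simp
  next
    case False then have "k = - real (nat (-j))" using k by simp
    then show ?thesis using nat_mult[of "nat (-j)" x] neg[of "real (nat (-j)) * x"] by simp
  qed
qed
lemma int: "k \<in> \<int> \<Longrightarrow> \<phi> k = k" using int_mult[of k 1] one by simp
lemma inner_phi: fixes a y0 :: "real^'d" assumes "integral_vec a"
  shows "a \<bullet> (\<chi> j. \<phi> (y0 $ j)) = \<phi> (a \<bullet> y0)"
  using assms unfolding inner_vec_def integral_vec_def
  by (simp add: sum int_mult)
end

lemma common_denom:
  fixes m :: nat and \<mu> :: "nat \<Rightarrow> real"
  assumes "\<forall>i<m. \<mu> i \<in> \<rat>"
  shows "\<exists>D::int. D > 0 \<and> (\<forall>i<m. of_int D * \<mu> i \<in> \<int>)"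
  using assms
proof (induction m)
  case 0 then show ?case by (intro exI[of _ 1]) auto
next
  case (Suc m)
  then obtain D::int where D: "D > 0" "\<forall>i<m. of_int D * \<mu> i \<in> \<int>" by auto
  have "\<mu> m \<in> \<rat>" using Suc.prems by auto
  then obtain p q where pq: "q > 0" "\<mu> m = of_int p / of_int q" by (metis Rats_cases')
  show ?case
  proof (intro exI[of _ "D*q"] conjI allI impI)
    show "D * q > 0" using D pq by simp
    fix i assume "i < Suc m"
    then consider "i < m" | "i = m" by linarith
    then show "of_int (D*q) * \<mu> i \<in> \<int>"
    proof cases
      case 1
      then have "of_int (D*q) * \<mu> i = of_int q * (of_int D * \<mu> i)" by simp
      then show ?thesis using D 1 by (metis Ints_mult Ints_of_int)
    next
      case 2
      have "of_int (D*q) * \<mu> i = of_int (D * p)" using pq 2 by (simp add: field_simps)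
      then show ?thesis by (metis Ints_of_int)
    qed
  qed
qed

lemma part1:
  fixes a :: "nat \<Rightarrow> real^'d"
  assumes ai: "\<forall>i<m. integral_vec (a i)"
    and l: "\<forall>i<m. l i \<ge> 0" "\<exists>i<m. l i \<noteq> 0" "(\<Sum>i<m. l i *\<^sub>R a i) = 0"
    and eps: "\<epsilon> > 0"
  shows "finite {c::real. 0 < c \<and> c \<le> 1 / \<epsilon> \<and>
                                 (\<exists>x::real^'d. \<forall>i<m. a i \<bullet> x + c \<in> \<int>)}"
proof -
  obtain \<phi> :: "real \<Rightarrow> real" where ph: "\<forall>x y. \<phi> (x+y) = \<phi> x + \<phi> y" "\<phi> 1 = 1" "\<forall>x. \<phi> x \<in> \<rat>"
    using exists_phi by blast
  interpret addphi \<phi> using ph by unfold_locales auto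
  define s where "s = (\<Sum>i<m. l i)"
  have s: "s > 0" unfolding s_def using l(1,2) by (metis finite_lessThan lessThan_iff sum_pos2 order_less_le)
  define \<mu> where "\<mu> i = \<phi> (l i / s)" for i
  have comp: "(\<Sum>i<m. \<mu> i * a i $ j) = 0" for j
  proof -
    have "(\<Sum>i<m. l i * a i $ j) = 0" using arg_cong[OF l(3), of "\<lambda>v. v $ j"] by simp
    then have "(\<Sum>i<m. a i $ j * (l i / s)) = 0"
      by (simp add: sum_divide_distrib[symmetric] mult.commute)
    then have "\<phi> (\<Sum>i<m. a i $ j * (l i / s)) = 0" using zero by simp
    moreover have "\<phi> (\<Sum>i<m. a i $ j * (l i / s)) = (\<Sum>i<m. \<mu> i * a i $ j)"
      unfolding sum \<mu>_def using ai
      by (intro sum.cong) (auto simp: int_mult integral_vec_def mult.commute simp del: times_divide_eq_right)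
    ultimately show ?thesis by simp
  qed
  have sum1: "(\<Sum>i<m. \<mu> i) = 1"
  proof -
    have "(\<Sum>i<m. l i / s) = 1" using s by (simp add: sum_divide_distrib[symmetric] s_def)
    then show ?thesis unfolding \<mu>_def using one sum by metis
  qed
  obtain D::int where D: "D > 0" "\<forall>i<m. of_int D * \<mu> i \<in> \<int>"
    using common_denom[of m \<mu>] ph(3) \<mu>_def by auto
  have key: "of_int D * c \<in> \<int>" if "\<forall>i<m. a i \<bullet> x + c \<in> \<int>" for x c
  proof -
    have "(\<Sum>i<m. \<mu> i * (a i \<bullet> x + c)) = (\<Sum>i<m. \<mu> i * (a i \<bullet> x)) + c"
      by (simp add: algebra_simps sum.distrib sum_distrib_left[symmetric] sum1)
    also have "(\<Sum>i<m. \<mu> i * (a i \<bullet> x)) = (\<Sum>j\<in>UNIV. x $ j * (\<Sum>i<m. \<mu> i * a i $ j))"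
      unfolding inner_vec_def by (simp add: sum_distrib_left sum.swap[of _ "{..<m}"] algebra_simps)
    also have "\<dots> = 0" by (simp add: comp)
    finally have "c = (\<Sum>i<m. \<mu> i * (a i \<bullet> x + c))" by simp
    then have "of_int D * c = (\<Sum>i<m. of_int D * (\<mu> i * (a i \<bullet> x + c)))"
      by (metis sum_distrib_left)
    also have "\<dots> = (\<Sum>i<m. (of_int D * \<mu> i) * (a i \<bullet> x + c))" by (simp add: mult.assoc)
    also have "\<dots> \<in> \<int>"
    proof (rule Ints_sum)
      fix i assume "i \<in> {..<m}"
      then show "(of_int D * \<mu> i) * (a i \<bullet> x + c) \<in> \<int>" using D that
        by (metis Ints_mult lessThan_iff)
    qed
    finally show ?thesis .
  qed
  have "{c::real. 0 < c \<and> c \<le> 1 / \<epsilon> \<and> (\<exists>x::real^'d. \<forall>i<m. a i \<bullet> x + c \<in> \<int>)}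
        \<subseteq> (\<lambda>k::int. of_int k / of_int D) ` {0..\<lceil>of_int D / \<epsilon>\<rceil>}"
  proof
    fix c assume "c \<in> {c::real. 0 < c \<and> c \<le> 1 / \<epsilon> \<and> (\<exists>x::real^'d. \<forall>i<m. a i \<bullet> x + c \<in> \<int>)}"
    then obtain x where c: "0 < c" "c \<le> 1/\<epsilon>" "\<forall>i<m. a i \<bullet> x + c \<in> \<int>" by auto
    obtain k where k: "of_int D * c = of_int k" using key[OF c(3)] Ints_cases by blast
    have ck: "c = of_int k / of_int D" using k D by (simp add: field_simps)
    have "of_int k \<le> of_int D / \<epsilon>" using k c(2) D eps
      by (metis divide_inverse mult_left_mono of_int_0_less_iff less_imp_le mult.right_neutral inverse_eq_divide)
    then have "k \<le> \<lceil>of_int D / \<epsilon>\<rceil>" by linarith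
    moreover have "k \<ge> 0" using k c D by (smt (verit) mult_pos_pos of_int_0_less_iff)
    ultimately show "c \<in> (\<lambda>k::int. of_int k / of_int D) ` {0..\<lceil>of_int D / \<epsilon>\<rceil>}"
      using ck by auto
  qed
  then show ?thesis by (rule finite_subset) simp
qed



lemma norm_ge1:
  fixes v :: "real^'d"
  assumes "integral_vec v" "v \<noteq> 0" shows "norm v \<ge> 1"
proof -
  obtain j where j: "v $ j \<noteq> 0" using assms(2) by (metis vec_eq_iff zero_index)
  have "\<bar>v $ j\<bar> \<ge> 1" using assms(1) j Ints_nonzero_abs_ge1 unfolding integral_vec_def by blast
  then show ?thesis using component_le_norm_cart[of v j] by linarith
qed

lemma small_s:
  fixes g h :: "nat \<Rightarrow> real"
  assumes "finite J" "\<forall>j\<in>J. g j > 0"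
  shows "\<exists>s>0. \<forall>j\<in>J. s * h j \<le> g j"
  using assms
proof (induction J rule: finite_induct)
  case empty then show ?case by (intro exI[of _ 1]) auto
next
  case (insert j K)
  then obtain s where s: "s > 0" "\<forall>k\<in>K. s * h k \<le> g k" by auto
  have gj: "g j > 0" using insert by auto
  define s' where "s' = min s (g j / (\<bar>h j\<bar> + 1))"
  have s'pos: "s' > 0" using s gj by (simp add: s'_def)
  have s'le: "s' \<le> s" by (simp add: s'_def)
  have s'le2: "s' \<le> g j / (\<bar>h j\<bar> + 1)" by (simp add: s'_def)
  have A: "s' * h j \<le> g j"
  proof -
    have "s' * h j \<le> s' * (\<bar>h j\<bar> + 1)" using s'pos by (intro mult_left_mono) auto
    also have "\<dots> \<le> g j / (\<bar>h j\<bar> + 1) * (\<bar>h j\<bar> + 1)"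
      using s'le2 by (intro mult_right_mono) auto
    also have "\<dots> = g j" by (simp add: field_simps add_pos_nonneg)
    finally show ?thesis .
  qed
  have B: "s' * h k \<le> g k" if "k \<in> K" for k
  proof (cases "h k \<ge> 0")
    case True
    then have "s' * h k \<le> s * h k" using s'le by (intro mult_right_mono) auto
    moreover have "s * h k \<le> g k" using s(2) that by blast
    ultimately show ?thesis by linarith
  next
    case False
    then have "s' * h k < 0" using s'pos by (simp add: mult_pos_neg)
    moreover have "g k > 0" using insert.prems that by blast
    ultimately show ?thesis by linarith
  qed
  show ?case
  proof (intro exI[of _ s'] conjI ballI)
    show "s' > 0" by fact
    fix k assume "k \<in> insert j K" then show "s' * h k \<le> g k" using A B by (cases "k = j") auto
  qed
qed

lemma part2:
  fixes a :: "nat \<Rightarrow> real^'d"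
  assumes prim: "\<forall>i<n. primitive_vec (a i)" and bint: "\<forall>i<n. b i \<in> \<int>"
   and lp: "lattice_polytope (polyh n a b)" and ad: "aff_dim (polyh n a b) = int CARD('d)"
  shows "\<exists>y::real^'d. rational_vec y \<and>
                 (\<forall>i\<in>core_normal_idx n a b. a i \<bullet> y + qcd_inv n a b \<in> \<int>)"
proof -
  define P where "P = polyh n a b"
  obtain S where S: "finite S" "P = convex hull S" using lp unfolding P_def lattice_polytope_def by blast
  have cP: "compact P" unfolding S(2) by (rule compact_convex_hull[OF finite_imp_compact[OF S(1)]])
  have convP: "convex P" unfolding S(2) by (rule convex_convex_hull)
  have Pne: "P \<noteq> {}"
  proof
    assume "P = {}" then have "aff_dim P = -1" by simp
    then show False using ad unfolding P_def by simp
  qed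
  have "rel_interior P \<noteq> {}" using rel_interior_eq_empty[OF convP] Pne by simp
  moreover have "interior P = rel_interior P" using ad interior_rel_interior_gen[of P]
    unfolding P_def by simp
  ultimately obtain x0 where "x0 \<in> interior P" by auto
  then obtain e where e: "e > 0" "ball x0 e \<subseteq> P" using mem_interior by blast
  have aint: "integral_vec (a i)" "a i \<noteq> 0" if "i < n" for i
    using prim that unfolding primitive_vec_def by auto
  have gap: "a i \<bullet> x0 + e/2 \<le> b i" if i: "i < n" for i
  proof -
    have na: "norm (a i) \<ge> 1" using norm_ge1 aint[OF i] by blast
    define w where "w = x0 + (e/2/norm(a i)) *\<^sub>R a i"
    have "dist x0 w = e/2" using na e aint(2)[OF i] by (simp add: w_def dist_norm)
    then have "w \<in> P" using e by auto
    then have "a i \<bullet> w \<le> b i" unfolding P_def polyh_def using i by auto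
    moreover have "a i \<bullet> w = a i \<bullet> x0 + e/2 * norm (a i)"
      using na by (simp add: w_def inner_add_right power2_norm_eq_inner[symmetric] power2_eq_square)
    moreover have "e/2 * norm (a i) \<ge> e/2" using na e by simp
    ultimately show ?thesis by linarith
  qed
  have npos: "n > 0"
  proof (rule ccontr)
    assume "\<not> n > 0" then have "P = UNIV" unfolding P_def polyh_def by auto
    then show False using cP compact_imp_bounded not_bounded_UNIV by metis
  qed
  obtain R where R: "\<forall>x\<in>P. norm x \<le> R" using compact_imp_bounded[OF cP] bounded_iff by blast
  define T where "T = {p::(real^'d) \<times> real. (\<forall>i<n. a i \<bullet> fst p + snd p \<le> b i) \<and> 0 \<le> snd p}"
  have TP: "fst p \<in> P" if "p \<in> T" for p
    using that unfolding T_def P_def polyh_def by (auto intro: order_trans[rotated])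
  have "T = (\<Inter>i\<in>{..<n}. {p. a i \<bullet> fst p + snd p \<le> b i}) \<inter> {p. 0 \<le> snd p}"
    unfolding T_def by auto
  then have clT: "closed T"
    by (auto intro!: closed_Int closed_INT closed_Collect_le continuous_intros)
  define M where "M = b 0 + norm (a 0) * R"
  have "T \<subseteq> cball 0 R \<times> {0..M}"
  proof
    fix p assume p: "p \<in> T"
    then have fp: "norm (fst p) \<le> R" using R TP by blast
    have "a 0 \<bullet> fst p + snd p \<le> b 0" using p npos unfolding T_def by auto
    moreover have "\<bar>a 0 \<bullet> fst p\<bar> \<le> norm (a 0) * R"
      using Cauchy_Schwarz_ineq2[of "a 0" "fst p"] fp
      by (meson mult_left_mono norm_ge_zero order_trans)
    ultimately have "snd p \<le> M" unfolding M_def by linarith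
    then show "p \<in> cball 0 R \<times> {0..M}" using p fp unfolding T_def
      by (cases p) auto
  qed
  then have "bounded T" by (rule bounded_subset[rotated]) (intro bounded_Times bounded_cball bounded_closed_interval)
  then have cT: "compact T" using clT compact_eq_bounded_closed by blast
  have x0T: "(x0, e/2) \<in> T" using gap e unfolding T_def by auto
  obtain p where p: "p \<in> T" "\<forall>q\<in>T. snd q \<le> snd p"
    using continuous_attains_sup[OF cT _ continuous_on_snd[OF continuous_on_id]] x0T by blast
  define c0 where "c0 = snd p"
  define xs where "xs = fst p"
  have c0pos: "c0 > 0" using p(2) x0T e unfolding c0_def by force
  have xs: "xs \<in> shrunk n a b c0" using p(1) unfolding T_def shrunk_def xs_def c0_def
    by (auto simp: algebra_simps)
  have upper: "c \<le> c0" if cpos: "c > 0" and cne: "shrunk n a b c \<noteq> {}" for c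
  proof -
    obtain x where "x \<in> shrunk n a b c" using cne by auto
    then have "(x, c) \<in> T" using cpos unfolding T_def shrunk_def by (auto simp: algebra_simps)
    then show ?thesis using p(2) unfolding c0_def by force
  qed
  have qi: "qcd_inv n a b = c0" unfolding qcd_inv_def
    by (rule Greatest_equality) (use c0pos xs upper in auto)
  have core: "core n a b = shrunk n a b c0" unfolding core_def qi ..
  define I where "I = core_normal_idx n a b"
  define J where "J = {j. j < n \<and> j \<notin> I}"
  have Iin: "a i \<bullet> y = b i - c0" if "i \<in> I" "y \<in> shrunk n a b c0" for i y
    using that unfolding I_def core_normal_idx_def core qi by auto
  have In: "i \<in> I \<Longrightarrow> i < n" for i unfolding I_def core_normal_idx_def by auto
  have Jwit: "\<exists>y\<in>shrunk n a b c0. a j \<bullet> y < b j - c0" if "j \<in> J" for j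
  proof -
    from that have "j < n" "j \<notin> I" unfolding J_def by auto
    then obtain y where "y \<in> shrunk n a b c0" "a j \<bullet> y \<noteq> b j - c0"
      unfolding I_def core_normal_idx_def core qi by auto
    moreover then have "a j \<bullet> y \<le> b j - c0" using \<open>j < n\<close> unfolding shrunk_def by auto
    ultimately show ?thesis by force
  qed
  have "\<forall>K. finite K \<longrightarrow> K \<subseteq> J \<longrightarrow> (\<exists>y\<in>shrunk n a b c0. \<forall>j\<in>K. a j \<bullet> y < b j - c0)"
  proof (intro allI impI)
    fix K :: "nat set" assume "finite K" "K \<subseteq> J"
    then show "\<exists>y\<in>shrunk n a b c0. \<forall>j\<in>K. a j \<bullet> y < b j - c0"
    proof (induction K rule: finite_induct)
      case empty then show ?case using xs by auto
    next
      case (insert j K)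
      then obtain y where y: "y \<in> shrunk n a b c0" "\<forall>k\<in>K. a k \<bullet> y < b k - c0" by auto
      obtain yj where yj: "yj \<in> shrunk n a b c0" "a j \<bullet> yj < b j - c0" using Jwit[of j] insert by blast
      define z where "z = (1/2) *\<^sub>R (y + yj)"
      have az: "a k \<bullet> z = (a k \<bullet> y + a k \<bullet> yj) / 2" for k
        by (simp add: z_def inner_add_right)
      have "z \<in> shrunk n a b c0" unfolding shrunk_def
      proof (intro CollectI allI impI)
        fix i assume "i < n"
        then have "a i \<bullet> y \<le> b i - c0" "a i \<bullet> yj \<le> b i - c0"
          using y(1) yj(1) unfolding shrunk_def by auto
        then show "a i \<bullet> z \<le> b i - c0" unfolding az by (simp add: field_simps)
      qed
      moreover have "a k \<bullet> z < b k - c0" if "k \<in> insert j K" for k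
      proof -
        have "k \<in> J" using that insert by auto
        then have "k < n" unfolding J_def by auto
        then have "a k \<bullet> y \<le> b k - c0" "a k \<bullet> yj \<le> b k - c0" using y(1) yj(1) unfolding shrunk_def by auto
        then show ?thesis using that y(2) yj(2) unfolding az by auto
      qed
      ultimately show ?case by blast
    qed
  qed
  moreover have "finite J" unfolding J_def by auto
  ultimately obtain y0 where y0: "y0 \<in> shrunk n a b c0" "\<forall>j\<in>J. a j \<bullet> y0 < b j - c0" by blast
  have const: "c = c0" if yc: "\<forall>i\<in>I. a i \<bullet> y + c = b i" for y c
  proof (rule ccontr)
    assume ne: "c \<noteq> c0"
    obtain v t where vt: "t > 0" "\<forall>i\<in>I. a i \<bullet> v + t = 0"
    proof (cases "c > c0")
      case True
      show ?thesis
        by (rule that[of "c - c0" "y - y0"]) (use True yc Iin y0(1) in \<open>auto simp: inner_diff_right\<close>)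
    next
      case False
      then have "c0 > c" using ne by auto
      show ?thesis
        by (rule that[of "c0 - c" "y0 - y"]) (use \<open>c0 > c\<close> yc Iin y0(1) in \<open>auto simp: inner_diff_right\<close>)
    qed
    obtain s where s: "s > 0" "\<forall>j\<in>J. s * (a j \<bullet> v + t) \<le> b j - c0 - a j \<bullet> y0"
      using small_s[OF \<open>finite J\<close>, of "\<lambda>j. b j - c0 - a j \<bullet> y0" "\<lambda>j. a j \<bullet> v + t"] y0(2) by auto
    define w where "w = y0 + s *\<^sub>R v"
    have "w \<in> shrunk n a b (c0 + s * t)"
      unfolding shrunk_def
    proof (intro CollectI allI impI)
      fix i assume i: "i < n"
      show "a i \<bullet> w \<le> b i - (c0 + s * t)"
      proof (cases "i \<in> I")
        case True
        then have "a i \<bullet> y0 = b i - c0" "a i \<bullet> v = - t" using Iin y0(1) vt(2) by auto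
        then show ?thesis by (simp add: w_def inner_add_right)
      next
        case False
        then have "i \<in> J" using i unfolding J_def by auto
        then show ?thesis using s(2) by (simp add: w_def inner_add_right algebra_simps)
      qed
    qed
    then have "c0 + s * t \<le> c0" using upper[of "c0 + s*t"] c0pos s vt by (auto simp: add_pos_pos)
    then show False using mult_pos_pos[OF s(1) vt(1)] by linarith
  qed
  obtain \<phi> :: "real \<Rightarrow> real" where ph: "\<forall>x y. \<phi> (x+y) = \<phi> x + \<phi> y" "\<phi> 1 = 1" "\<forall>x. \<phi> x \<in> \<rat>"
    using exists_phi by blast
  interpret addphi \<phi> using ph by unfold_locales auto
  define y where "y = (\<chi> j. \<phi> (y0 $ j))"
  have eqs: "a i \<bullet> y + \<phi> c0 = b i" if "i \<in> I" for i
  proof -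
    have "a i \<bullet> y = \<phi> (a i \<bullet> y0)" unfolding y_def using aint In that inner_phi by blast
    then have "a i \<bullet> y + \<phi> c0 = \<phi> (a i \<bullet> y0 + c0)" using add by simp
    also have "a i \<bullet> y0 + c0 = b i" using Iin that y0(1) by simp
    also have "\<phi> (b i) = b i" using int bint In that by blast
    finally show ?thesis .
  qed
  then have "\<phi> c0 = c0" using const by blast
  then have "\<forall>i\<in>I. a i \<bullet> y + qcd_inv n a b \<in> \<int>" using eqs bint In qi by auto
  moreover have "rational_vec y" unfolding rational_vec_def y_def using ph(3) by simp
  ultimately show ?thesis unfolding I_def by blast
qed


theorem mainTheorem7:
  shows "(\<forall>(m::nat) (a :: nat \<Rightarrow> real^'d) (\<epsilon>::real).
            (\<forall>i<m. integral_vec (a i)) \<and>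
            (\<exists>l::nat \<Rightarrow> real. (\<forall>i<m. l i \<ge> 0) \<and> (\<exists>i<m. l i \<noteq> 0) \<and>
                 (\<Sum>i<m. l i *\<^sub>R a i) = 0) \<and>
            \<epsilon> > 0
          \<longrightarrow> finite {c::real. 0 < c \<and> c \<le> 1 / \<epsilon> \<and>
                                 (\<exists>x::real^'d. \<forall>i<m. a i \<bullet> x + c \<in> \<int>)})
       \<and>
         (\<forall>(n::nat) (a :: nat \<Rightarrow> real^'d) (b :: nat \<Rightarrow> real).
            (\<forall>i<n. primitive_vec (a i)) \<and> (\<forall>i<n. b i \<in> \<int>) \<and>
            irredundant n a b \<and>
            lattice_polytope (polyh n a b) \<and>
            aff_dim (polyh n a b) = int CARD('d)
          \<longrightarrow> (\<exists>y::real^'d. rational_vec y \<and>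
                 (\<forall>i\<in>core_normal_idx n a b. a i \<bullet> y + qcd_inv n a b \<in> \<int>)))"
  proof (intro conjI allI impI)
  fix m :: nat and a :: "nat \<Rightarrow> real^'d" and \<epsilon> :: real
  assume h: "(\<forall>i<m. integral_vec (a i)) \<and>
            (\<exists>l::nat \<Rightarrow> real. (\<forall>i<m. l i \<ge> 0) \<and> (\<exists>i<m. l i \<noteq> 0) \<and>
                 (\<Sum>i<m. l i *\<^sub>R a i) = 0) \<and> \<epsilon> > 0"
  then obtain l where "\<forall>i<m. l i \<ge> 0" "\<exists>i<m. l i \<noteq> 0" "(\<Sum>i<m. l i *\<^sub>R a i) = 0" by blast
  then show "finite {c::real. 0 < c \<and> c \<le> 1 / \<epsilon> \<and>
                                 (\<exists>x::real^'d. \<forall>i<m. a i \<bullet> x + c \<in> \<int>)}"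
    using part1[of m a l \<epsilon>] h by blast
next
  fix n :: nat and a :: "nat \<Rightarrow> real^'d" and b :: "nat \<Rightarrow> real"
  assume "(\<forall>i<n. primitive_vec (a i)) \<and> (\<forall>i<n. b i \<in> \<int>) \<and>
            irredundant n a b \<and> lattice_polytope (polyh n a b) \<and>
            aff_dim (polyh n a b) = int CARD('d)"
  then show "\<exists>y::real^'d. rational_vec y \<and>
                 (\<forall>i\<in>core_normal_idx n a b. a i \<bullet> y + qcd_inv n a b \<in> \<int>)"
    using part2[of n a b] by blast
qed

end
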